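(* Let $r\ge 1$ and let $G$ be a connected $r$-regular graph. Then $G$ has a strong clique of size two if and only if $G$ is isomorphic to the complete bipartite graph $K_{r,r}$.
   Context: A clique is strong if it intersects every maximal (inclusion-wise) independent set of the graph. *)

theory Defs
  imports Main
begin

definition simple_graph :: "'a set \<Rightarrow> ('a \<Rightarrow> 'a \<Rightarrow> bool) \<Rightarrow> bool" where
  "simple_graph V E \<longleftrightarrow> finite V \<and> (\<forall>u v. E u v \<longrightarrow> u \<in> V \<and> v \<in> V)
     \<and> (\<forall>u v. E u v \<longrightarrow> E v u) \<and> (\<forall>v. \<not> E v v)"

definition neighbours :: "'a set \<Rightarrow> ('a \<Rightarrow> 'a \<Rightarrow> bool) \<Rightarrow> 'a \<Rightarrow> 'a set" where
  "neighbours V E v = {u \<in> V. E v u}"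

definition regular :: "'a set \<Rightarrow> ('a \<Rightarrow> 'a \<Rightarrow> bool) \<Rightarrow> nat \<Rightarrow> bool" where
  "regular V E r \<longleftrightarrow> (\<forall>v \<in> V. card (neighbours V E v) = r)"

definition connected_graph :: "'a set \<Rightarrow> ('a \<Rightarrow> 'a \<Rightarrow> bool) \<Rightarrow> bool" where
  "connected_graph V E \<longleftrightarrow> V \<noteq> {} \<and> (\<forall>u \<in> V. \<forall>v \<in> V. (\<lambda>x y. E x y)\<^sup>*\<^sup>* u v)"

definition clique :: "'a set \<Rightarrow> ('a \<Rightarrow> 'a \<Rightarrow> bool) \<Rightarrow> 'a set \<Rightarrow> bool" where
  "clique V E C \<longleftrightarrow> C \<subseteq> V \<and> (\<forall>u \<in> C. \<forall>v \<in> C. u \<noteq> v \<longrightarrow> E u v)"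

definition independent_set :: "'a set \<Rightarrow> ('a \<Rightarrow> 'a \<Rightarrow> bool) \<Rightarrow> 'a set \<Rightarrow> bool" where
  "independent_set V E I \<longleftrightarrow> I \<subseteq> V \<and> (\<forall>u \<in> I. \<forall>v \<in> I. \<not> E u v)"

definition maximal_independent_set :: "'a set \<Rightarrow> ('a \<Rightarrow> 'a \<Rightarrow> bool) \<Rightarrow> 'a set \<Rightarrow> bool" where
  "maximal_independent_set V E I \<longleftrightarrow> independent_set V E I \<and>
     (\<forall>J. independent_set V E J \<and> I \<subseteq> J \<longrightarrow> J = I)"

definition strong_clique :: "'a set \<Rightarrow> ('a \<Rightarrow> 'a \<Rightarrow> bool) \<Rightarrow> 'a set \<Rightarrow> bool" where
  "strong_clique V E C \<longleftrightarrow> clique V E C \<and>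
     (\<forall>I. maximal_independent_set V E I \<longrightarrow> C \<inter> I \<noteq> {})"

definition Krr_vertices :: "nat \<Rightarrow> (nat \<times> bool) set" where
  "Krr_vertices r = {0..<r} \<times> UNIV"

definition Krr_edge :: "nat \<Rightarrow> nat \<times> bool \<Rightarrow> nat \<times> bool \<Rightarrow> bool" where
  "Krr_edge r x y \<longleftrightarrow> x \<in> Krr_vertices r \<and> y \<in> Krr_vertices r \<and> snd x \<noteq> snd y"

definition graph_iso :: "'a set \<Rightarrow> ('a \<Rightarrow> 'a \<Rightarrow> bool) \<Rightarrow> 'b set \<Rightarrow> ('b \<Rightarrow> 'b \<Rightarrow> bool) \<Rightarrow> bool" where
  "graph_iso V E W F \<longleftrightarrow> (\<exists>f. bij_betw f V W \<and> (\<forall>u \<in> V. \<forall>v \<in> V. E u v \<longleftrightarrow> F (f u) (f v)))"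

end

theory Submission
  imports Defs
begin

lemma ext_max:
  assumes "finite V" "independent_set V E S"
  shows "\<exists>I. maximal_independent_set V E I \<and> S \<subseteq> I"
proof -
  let ?F = "{J. independent_set V E J \<and> S \<subseteq> J}"
  have fin: "finite ?F"
    by (rule finite_subset[of _ "Pow V"]) (auto simp: independent_set_def assms(1))
  have ne: "?F \<noteq> {}" using assms(2) by auto
  obtain I where I: "I \<in> ?F" "\<forall>J\<in>?F. I \<le> J \<longrightarrow> I = J"
    using finite_has_maximal[OF fin ne] by blast
  show ?thesis
    unfolding maximal_independent_set_def using I by blast
qed

theorem mainTheorem11:
  fixes V :: "'a set" and E :: "'a \<Rightarrow> 'a \<Rightarrow> bool" and r :: nat
  assumes "r \<ge> 1"
    and "simple_graph V E"
    and "connected_graph V E"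
    and "regular V E r"
  shows "(\<exists>C. strong_clique V E C \<and> card C = 2) \<longleftrightarrow>
         graph_iso V E (Krr_vertices r) (Krr_edge r)"
proof -
  have finV: "finite V" and inV: "\<And>u v. E u v \<Longrightarrow> u \<in> V \<and> v \<in> V"
    and sym: "\<And>u v. E u v \<Longrightarrow> E v u" and irr: "\<And>v. \<not> E v v"
    using assms(2) unfolding simple_graph_def by auto
  have reg: "\<And>v. v \<in> V \<Longrightarrow> card (neighbours V E v) = r"
    using assms(4) unfolding regular_def by auto
  show ?thesis
  proof
    assume "\<exists>C. strong_clique V E C \<and> card C = 2"
    then obtain C where sc: "strong_clique V E C" and c2: "card C = 2" by blast
    then obtain a b where C: "C = {a, b}" "a \<noteq> b" by (metis card_2_iff)
    have ab: "E a b" and aV: "a \<in> V" and bV: "b \<in> V"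
      using sc C unfolding strong_clique_def clique_def by auto
    have strong: "\<And>I. maximal_independent_set V E I \<Longrightarrow> a \<in> I \<or> b \<in> I"
      using sc C unfolding strong_clique_def by auto
    define A where "A = neighbours V E b"
    define B where "B = neighbours V E a"
    have aA: "a \<in> A" using ab sym aV unfolding A_def neighbours_def by auto
    have bB: "b \<in> B" using ab bV unfolding B_def neighbours_def by auto
    have AV: "A \<subseteq> V" and BV: "B \<subseteq> V" unfolding A_def B_def neighbours_def by auto
    have cardA: "card A = r" and cardB: "card B = r" using reg aV bV A_def B_def by auto
    have finA: "finite A" and finB: "finite B" using AV BV finV finite_subset by auto
    have disj: "A \<inter> B = {}"
    proof (rule ccontr)
      assume "A \<inter> B \<noteq> {}"
      then obtain x where x: "E b x" "E a x" "x \<in> V"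
        unfolding A_def B_def neighbours_def by auto
      have "independent_set V E {x}" using x irr unfolding independent_set_def by auto
      then obtain I where I: "maximal_independent_set V E I" "x \<in> I"
        using ext_max[OF finV] by blast
      have ind: "\<And>u v. u \<in> I \<Longrightarrow> v \<in> I \<Longrightarrow> \<not> E u v"
        using I(1) unfolding maximal_independent_set_def independent_set_def by auto
      show False using strong[OF I(1)] ind I(2) x by blast
    qed
    have AB: "\<And>x y. x \<in> A \<Longrightarrow> y \<in> B \<Longrightarrow> E x y"
    proof -
      fix x y assume x: "x \<in> A" and y: "y \<in> B"
      show "E x y"
      proof (cases "x = a")
        case True then show ?thesis using y unfolding B_def neighbours_def by auto
      next
        case xa: False
        show ?thesis
        proof (cases "y = b")
          case True then show ?thesis using x sym unfolding A_def neighbours_def by auto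
        next
          case yb: False
          show ?thesis
          proof (rule ccontr)
            assume nxy: "\<not> E x y"
            have xy: "x \<noteq> y" using x y disj by auto
            have "independent_set V E {x, y}"
              using x y AV BV irr nxy sym unfolding independent_set_def by auto
            then obtain I where I: "maximal_independent_set V E I" "x \<in> I" "y \<in> I"
              using ext_max[OF finV] by blast
            have ind: "\<And>u v. u \<in> I \<Longrightarrow> v \<in> I \<Longrightarrow> \<not> E u v"
              using I(1) unfolding maximal_independent_set_def independent_set_def by auto
            have "E a y" using y unfolding B_def neighbours_def by auto
            moreover have "E b x" using x unfolding A_def neighbours_def by auto
            ultimately show False using strong[OF I(1)] ind I(2,3) by blast
          qed
        qed
      qed
    qed
    have NA: "\<And>x. x \<in> A \<Longrightarrow> neighbours V E x = B"
    proof -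
      fix x assume x: "x \<in> A"
      have sub: "B \<subseteq> neighbours V E x" using AB x BV unfolding neighbours_def by auto
      have "card (neighbours V E x) = r" using reg x AV by auto
      moreover have "finite (neighbours V E x)" using finV unfolding neighbours_def by auto
      ultimately show "neighbours V E x = B" using sub cardB by (metis card_subset_eq)
    qed
    have NB: "\<And>y. y \<in> B \<Longrightarrow> neighbours V E y = A"
    proof -
      fix y assume y: "y \<in> B"
      have sub: "A \<subseteq> neighbours V E y" using AB y AV sym unfolding neighbours_def by auto
      have "card (neighbours V E y) = r" using reg y BV by auto
      moreover have "finite (neighbours V E y)" using finV unfolding neighbours_def by auto
      ultimately show "neighbours V E y = A" using sub cardA by (metis card_subset_eq)
    qed
    have VAB: "V = A \<union> B"
    proof
      show "A \<union> B \<subseteq> V" using AV BV by auto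
    next
      show "V \<subseteq> A \<union> B"
      proof
        fix v assume v: "v \<in> V"
        have "(\<lambda>x y. E x y)\<^sup>*\<^sup>* a v" using assms(3) aV v unfolding connected_graph_def by auto
        then show "v \<in> A \<union> B"
        proof (induction rule: rtranclp_induct)
          case base then show ?case using aA by auto
        next
          case (step y z)
          have "z \<in> neighbours V E y" using step(2) inV unfolding neighbours_def by auto
          then show ?case using step(3) NA NB by auto
        qed
      qed
    qed
    have noA: "\<And>x y. x \<in> A \<Longrightarrow> y \<in> A \<Longrightarrow> \<not> E x y"
    proof -
      fix x y assume "x \<in> A" "y \<in> A"
      then show "\<not> E x y" using NA[of x] disj AV unfolding neighbours_def by blast
    qed
    have noB: "\<And>x y. x \<in> B \<Longrightarrow> y \<in> B \<Longrightarrow> \<not> E x y"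
    proof -
      fix x y assume "x \<in> B" "y \<in> B"
      then show "\<not> E x y" using NB[of x] disj BV unfolding neighbours_def by blast
    qed
    obtain g where g: "bij_betw g A {0..<r}" using finite_same_card_bij[OF finA, of "{0..<r}"] cardA by auto
    obtain h where h: "bij_betw h B {0..<r}" using finite_same_card_bij[OF finB, of "{0..<r}"] cardB by auto
    define f where "f v = (if v \<in> A then (g v, False) else (h v, True))" for v
    have inj: "inj_on f V"
    proof (rule inj_onI)
      fix u v assume u: "u \<in> V" and v: "v \<in> V" and e: "f u = f v"
      show "u = v"
      proof (cases "u \<in> A")
        case True
        then have "v \<in> A" using e unfolding f_def by (auto split: if_splits)
        then show ?thesis using True e g unfolding f_def bij_betw_def inj_on_def by auto
      next
        case False
        then have "v \<notin> A" using e unfolding f_def by (auto split: if_splits)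
        then show ?thesis using False e h u v VAB unfolding f_def bij_betw_def inj_on_def by auto
      qed
    qed
    have img: "f ` V = Krr_vertices r"
    proof
      show "f ` V \<subseteq> Krr_vertices r"
        using g h VAB disj unfolding f_def Krr_vertices_def bij_betw_def by auto
    next
      show "Krr_vertices r \<subseteq> f ` V"
      proof
        fix p assume p: "p \<in> Krr_vertices r"
        obtain i s where ps: "p = (i, s)" "i < r" using p unfolding Krr_vertices_def by auto
        show "p \<in> f ` V"
        proof (cases s)
          case False
          have "i \<in> g ` A" using g ps by (simp add: bij_betw_def)
          then obtain x where "x \<in> A" "g x = i" by blast
          then show ?thesis using ps False AV unfolding f_def by (auto intro!: image_eqI[of _ _ x])
        next
          case True
          have "i \<in> h ` B" using h ps by (simp add: bij_betw_def)
          then obtain y where y: "y \<in> B" "h y = i" by blast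
          then have "y \<notin> A" using disj by auto
          then show ?thesis using y ps True BV unfolding f_def by (auto intro!: image_eqI[of _ _ y])
        qed
      qed
    qed
    have edge: "\<forall>u\<in>V. \<forall>v\<in>V. E u v \<longleftrightarrow> Krr_edge r (f u) (f v)"
    proof (intro ballI)
      fix u v assume u: "u \<in> V" and v: "v \<in> V"
      have mem: "f u \<in> Krr_vertices r" "f v \<in> Krr_vertices r" using img u v by auto
      have "E u v \<longleftrightarrow> snd (f u) \<noteq> snd (f v)"
        using u v VAB AB noA noB sym disj unfolding f_def by (auto)
      then show "E u v \<longleftrightarrow> Krr_edge r (f u) (f v)" using mem unfolding Krr_edge_def by auto
    qed
    show "graph_iso V E (Krr_vertices r) (Krr_edge r)"
      unfolding graph_iso_def bij_betw_def using inj img edge by blast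
  next
    assume "graph_iso V E (Krr_vertices r) (Krr_edge r)"
    then obtain f where bij: "bij_betw f V (Krr_vertices r)"
      and iso: "\<forall>u\<in>V. \<forall>v\<in>V. E u v \<longleftrightarrow> Krr_edge r (f u) (f v)"
      unfolding graph_iso_def by blast
    have fV: "\<And>v. v \<in> V \<Longrightarrow> f v \<in> Krr_vertices r" using bij unfolding bij_betw_def by auto
    have side: "\<And>u v. u \<in> V \<Longrightarrow> v \<in> V \<Longrightarrow> E u v \<longleftrightarrow> snd (f u) \<noteq> snd (f v)"
      using iso fV unfolding Krr_edge_def by auto
    have "(0, False) \<in> Krr_vertices r" "(0, True) \<in> Krr_vertices r"
      using assms(1) unfolding Krr_vertices_def by auto
    then obtain a b where a: "a \<in> V" "f a = (0, False)" and b: "b \<in> V" "f b = (0, True)"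
      using bij unfolding bij_betw_def by (metis imageE)
    have ab: "a \<noteq> b" using a b by auto
    have Eab: "E a b" using side a b by auto
    have "strong_clique V E {a, b}"
      unfolding strong_clique_def
    proof
      show "clique V E {a, b}" unfolding clique_def using a b Eab side by auto
    next
      show "\<forall>I. maximal_independent_set V E I \<longrightarrow> {a, b} \<inter> I \<noteq> {}"
      proof (intro allI impI)
        fix I assume mI: "maximal_independent_set V E I"
        have IV: "I \<subseteq> V" and ind: "\<And>u v. u \<in> I \<Longrightarrow> v \<in> I \<Longrightarrow> \<not> E u v"
          and mx: "\<And>J. independent_set V E J \<Longrightarrow> I \<subseteq> J \<Longrightarrow> J = I"
          using mI unfolding maximal_independent_set_def independent_set_def by auto
        show "{a, b} \<inter> I \<noteq> {}"
        proof
          assume none: "{a, b} \<inter> I = {}"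
          obtain c where c: "c \<in> V" "c \<notin> I" "\<forall>u\<in>I. snd (f u) = snd (f c)"
          proof (cases "\<exists>x\<in>I. snd (f x)")
            case True
            then obtain x where x: "x \<in> I" "snd (f x)" by blast
            have "\<forall>u\<in>I. snd (f u)" using ind[OF _ x(1)] side IV x by blast
            then show ?thesis using that[of b] b none by auto
          next
            case False
            then show ?thesis using that[of a] a none by auto
          qed
          have "\<forall>u\<in>insert c I. \<forall>v\<in>insert c I. \<not> E u v"
          proof (intro ballI)
            fix u v assume "u \<in> insert c I" "v \<in> insert c I"
            then have "u \<in> V" "v \<in> V" "snd (f u) = snd (f c)" "snd (f v) = snd (f c)"
              using IV c by auto
            then show "\<not> E u v" using side by simp
          qed
          then have "independent_set V E (insert c I)"
            unfolding independent_set_def using IV c by auto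
          then have "insert c I = I" using mx by blast
          then show False using c by auto
        qed
      qed
    qed
    then show "\<exists>C. strong_clique V E C \<and> card C = 2" using ab by (intro exI[of _ "{a,b}"]) auto
  qed
qed

end
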